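(* Let $G$ be a finite totally rectangular digraph that contains a cycle of net length $d>0$. Then $G$ contains a directed cycle of length $d$.
   Context: In a digraph $G$, a path is a sequence of vertices $(u_1,\dots,u_k)$ together with edges $(e_1,\dots,e_{k-1})$ where each $e_i$ is either $(u_i,u_{i+1})\in E(G)$ (a forward edge) or $(u_{i+1},u_i)\in E(G)$ (a backward edge); vertices need not be distinct. Its length is $k-1$, its net length is the number of forward edges minus the number of backward edges, and it is directed if all edges are forward. A cycle is a sequence $(u_0,\dots,u_{k-1})$ with edges $(e_0,\dots,e_{k-1})$ such that $(u_0,\dots,u_{k-1},u_0)$ with these edges is a path; its length is $k$, its net length is the net length of this path, and it is directed if this path is directed. A digraph $G$ is $k$-rectangular if whenever $G$ contains directed paths of length $k$ from $x$ to $y$, from $x'$ to $y$, and from $x'$ to $y'$, then $G$ contains a directed path of length $k$ from $x$ to $y'$. $G$ is totally rectangular if it is $k$-rectangular for all $k\ge 1$. *)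

theory Defs
  imports Main
begin

text \<open>A path is a nonempty list of vertices vs = [u_1,...,u_k] together with a list
ds of k-1 edge orientations: ds!i = True means the i-th edge is the forward
edge (u_i,u_{i+1}) \<in> E, False means it is the backward edge (u_{i+1},u_i) \<in> E.\<close>

definition is_path :: "'a set \<Rightarrow> ('a \<times> 'a) set \<Rightarrow> 'a list \<Rightarrow> bool list \<Rightarrow> bool" where
  "is_path V E vs ds \<longleftrightarrow> vs \<noteq> [] \<and> set vs \<subseteq> V \<and> length ds = length vs - 1 \<and>
     (\<forall>i < length ds. (if ds ! i then (vs ! i, vs ! Suc i) \<in> E else (vs ! Suc i, vs ! i) \<in> E))"

definition net_length :: "bool list \<Rightarrow> int" where
  "net_length ds = int (length (filter (\<lambda>b. b) ds)) - int (length (filter (\<lambda>b. \<not> b) ds))"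

definition directed :: "bool list \<Rightarrow> bool" where
  "directed ds \<longleftrightarrow> (\<forall>b \<in> set ds. b)"

definition is_cycle :: "'a set \<Rightarrow> ('a \<times> 'a) set \<Rightarrow> 'a list \<Rightarrow> bool list \<Rightarrow> bool" where
  "is_cycle V E vs ds \<longleftrightarrow> vs \<noteq> [] \<and> is_path V E (vs @ [hd vs]) ds"

definition has_dpath :: "'a set \<Rightarrow> ('a \<times> 'a) set \<Rightarrow> nat \<Rightarrow> 'a \<Rightarrow> 'a \<Rightarrow> bool" where
  "has_dpath V E k x y \<longleftrightarrow> (\<exists>vs ds. is_path V E vs ds \<and> directed ds \<and> length ds = k \<and>
      hd vs = x \<and> last vs = y)"

definition rectangular :: "'a set \<Rightarrow> ('a \<times> 'a) set \<Rightarrow> nat \<Rightarrow> bool" where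
  "rectangular V E k \<longleftrightarrow> (\<forall>x y x' y'. has_dpath V E k x y \<and> has_dpath V E k x' y \<and>
      has_dpath V E k x' y' \<longrightarrow> has_dpath V E k x y')"

definition totally_rectangular :: "'a set \<Rightarrow> ('a \<times> 'a) set \<Rightarrow> bool" where
  "totally_rectangular V E \<longleftrightarrow> (\<forall>k \<ge> 1. rectangular V E k)"

end

theory Submission imports Defs begin

fun dp :: "'a set \<Rightarrow> ('a \<times> 'a) set \<Rightarrow> nat \<Rightarrow> 'a \<Rightarrow> 'a \<Rightarrow> bool" where
  "dp V E 0 x y = (x \<in> V \<and> x = y)"
| "dp V E (Suc n) x z = (\<exists>y. (x, y) \<in> E \<and> dp V E n y z)"

lemma dp_V: assumes "E \<subseteq> V \<times> V" "dp V E n x y" shows "x \<in> V \<and> y \<in> V"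
  using assms(2) by (induction n arbitrary: x) (use assms(1) in auto)

lemma dp_add: assumes "E \<subseteq> V \<times> V"
  shows "dp V E (m + n) x z = (\<exists>y. dp V E m x y \<and> dp V E n y z)"
proof (induction m arbitrary: x)
  case 0
  then show ?case using dp_V[OF assms, of n x z] by auto
next
  case (Suc m)
  then show ?case by auto
qed

lemma dp_Suc_last: assumes "E \<subseteq> V \<times> V"
  shows "dp V E (Suc n) x z = (\<exists>y. dp V E n x y \<and> (y, z) \<in> E)"
  using dp_add[OF assms, of n 1 x z] assms by auto

lemma dp_to_path: assumes "E \<subseteq> V \<times> V"
  shows "dp V E n x y \<Longrightarrow> has_dpath V E n x y"
proof (induction n arbitrary: x)
  case 0
  then have "is_path V E [x] []" by (auto simp: is_path_def)
  then show ?case using 0 unfolding has_dpath_def directed_def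
    by (intro exI[of _ "[x]"] exI[of _ "[]"]) auto
next
  case (Suc n)
  then obtain u where xu: "(x,u) \<in> E" and "dp V E n u y" by auto
  with Suc.IH obtain vs ds where p: "is_path V E vs ds" "directed ds" "length ds = n"
    "hd vs = u" "last vs = y" unfolding has_dpath_def by blast
  have vne: "vs \<noteq> []" using p(1) by (simp add: is_path_def)
  have v0: "vs ! 0 = u" using p(4) vne by (metis hd_conv_nth)
  have "is_path V E (x # vs) (True # ds)"
    unfolding is_path_def
  proof (intro conjI allI impI)
    show "x # vs \<noteq> []" by simp
    show "set (x#vs) \<subseteq> V" using xu assms p(1) by (auto simp: is_path_def)
    show "length (True # ds) = length (x # vs) - 1" using p(1) vne by (auto simp: is_path_def)
    fix i assume i: "i < length (True # ds)"
    show "if (True # ds) ! i then ((x # vs) ! i, (x # vs) ! Suc i) \<in> E else ((x # vs) ! Suc i, (x # vs) ! i) \<in> E"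
    proof (cases i)
      case 0 then show ?thesis using xu v0 by simp
    next
      case (Suc i')
      then have "i' < length ds" using i by simp
      then have "if ds ! i' then (vs ! i', vs ! Suc i') \<in> E else (vs ! Suc i', vs ! i') \<in> E"
        using p(1) unfolding is_path_def by blast
      then show ?thesis using Suc by simp
    qed
  qed
  then show ?case unfolding has_dpath_def using p vne
    by (intro exI[of _ "x # vs"] exI[of _ "True # ds"]) (auto simp: directed_def)
qed

lemma path_to_dp: assumes "E \<subseteq> V \<times> V"
  shows "is_path V E vs ds \<Longrightarrow> directed ds \<Longrightarrow> length ds = n \<Longrightarrow> dp V E n (hd vs) (last vs)"
proof (induction n arbitrary: vs ds)
  case 0
  then have "length vs = 1" by (cases vs) (auto simp: is_path_def)
  then obtain x where "vs = [x]" by (cases vs) auto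
  then show ?case using 0 by (auto simp: is_path_def)
next
  case (Suc n)
  obtain b ds' where ds: "ds = b # ds'" using Suc.prems(3) by (cases ds) auto
  have lv: "length vs = Suc (Suc n)" using Suc.prems by (auto simp: is_path_def)
  then obtain x vs' where vs: "vs = x # vs'" by (cases vs) auto
  have vne: "vs' \<noteq> []" using lv vs by auto
  have b: "b" using Suc.prems(2) ds by (auto simp: directed_def)
  have "0 < length ds" using ds by simp
  then have "if ds ! 0 then (vs ! 0, vs ! Suc 0) \<in> E else (vs ! Suc 0, vs ! 0) \<in> E"
    using Suc.prems(1) unfolding is_path_def by blast
  then have e: "(x, hd vs') \<in> E" using ds vs b vne by (simp add: hd_conv_nth)
  have "is_path V E vs' ds'"
    unfolding is_path_def
  proof (intro conjI allI impI)
    show "vs' \<noteq> []" by fact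
    show "set vs' \<subseteq> V" using Suc.prems(1) vs by (auto simp: is_path_def)
    show "length ds' = length vs' - 1" using Suc.prems(1) vs ds by (auto simp: is_path_def)
    fix i assume "i < length ds'"
    then have "Suc i < length ds" using ds by simp
    then have "if ds ! Suc i then (vs ! Suc i, vs ! Suc (Suc i)) \<in> E else (vs ! Suc (Suc i), vs ! Suc i) \<in> E"
      using Suc.prems(1) unfolding is_path_def by blast
    then show "if ds' ! i then (vs' ! i, vs' ! Suc i) \<in> E else (vs' ! Suc i, vs' ! i) \<in> E"
      using ds vs by (metis nth_Cons_Suc)
  qed
  moreover have "directed ds'" using Suc.prems(2) ds by (auto simp: directed_def)
  moreover have "length ds' = n" using Suc.prems(3) ds by simp
  ultimately have "dp V E n (hd vs') (last vs')" using Suc.IH by blast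
  then show ?case using e vs vne by auto
qed

lemma has_dpath_dp: assumes "E \<subseteq> V \<times> V"
  shows "has_dpath V E n x y = dp V E n x y"
  using dp_to_path[OF assms] path_to_dp[OF assms] unfolding has_dpath_def by blast

lemma rect_dp: assumes "E \<subseteq> V \<times> V" "totally_rectangular V E" "k \<ge> 1"
  "dp V E k x y" "dp V E k x' y" "dp V E k x' y'" shows "dp V E k x y'"
  using assms unfolding totally_rectangular_def rectangular_def has_dpath_dp[OF assms(1)] by blast

lemma lemA: assumes EV: "E \<subseteq> V \<times> V" and TR: "totally_rectangular V E" and d: "d \<ge> 1"
  shows "dp V E q x y \<Longrightarrow> dp V E (q + d) x y \<Longrightarrow> \<exists>z. dp V E d z z"
proof (induction q arbitrary: x y rule: less_induct)
  case (less q x y)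
  show ?case
  proof (cases "q = 0")
    case True
    then show ?thesis using less.prems by auto
  next
    case False
    from less.prems(2) have "dp V E (d + q) x y" by (simp add: add.commute)
    then obtain u where xu: "dp V E d x u" and uy: "dp V E q u y" using dp_add[OF EV] by blast
    show ?thesis
    proof (cases "q < d")
      case True
      from xu have "dp V E (q + (d - q)) x u" using True by simp
      then obtain p where xp: "dp V E q x p" and pu: "dp V E (d - q) p u" using dp_add[OF EV] by blast
      have "dp V E q u p" using rect_dp[OF EV TR _ uy less.prems(1) xp] False by simp
      then have "dp V E (q + (d - q)) u u" using pu dp_add[OF EV] by blast
      then show ?thesis using True by auto
    next
      case False
      from uy have "dp V E ((q - d) + d) u y" using False by simp
      then obtain p where up: "dp V E (q - d) u p" and py: "dp V E d p y" using dp_add[OF EV] by blast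
      have "dp V E (d + (q - d)) x p" using xu up dp_add[OF EV] by blast
      then have xp: "dp V E q x p" using False by simp
      have "dp V E q u p" using rect_dp[OF EV TR _ uy less.prems(1) xp] \<open>q \<noteq> 0\<close> by simp
      then have "dp V E ((q - d) + d) u p" using False by simp
      moreover have "q - d < q" using d \<open>q \<noteq> 0\<close> by simp
      ultimately show ?thesis using less.IH up by blast
    qed
  qed
qed

lemma lemB:
  assumes EV: "E \<subseteq> V \<times> V" and TR: "totally_rectangular V E"
    and step: "\<And>t. if f t then (w t, w (Suc t)) \<in> E else (w (Suc t), w t) \<in> E"
    and hS: "\<And>t. h (Suc t) = h t + (if f t then 1 else -1)"
  shows "b - a = N \<Longrightarrow> a \<le> b \<Longrightarrow> (\<forall>t. a \<le> t \<and> t \<le> b \<longrightarrow> L \<le> h t \<and> h t \<le> L + int n)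
    \<Longrightarrow> a \<le> i \<Longrightarrow> i \<le> b \<Longrightarrow> a \<le> j \<Longrightarrow> j \<le> b \<Longrightarrow> h i = L \<Longrightarrow> h j = L + int n
    \<Longrightarrow> dp V E n (w i) (w j)"
proof (induction N arbitrary: a b L n i j rule: less_induct)
  case (less N a b L n i j)
  have wV: "w t \<in> V" for t using step[of t] EV by (auto split: if_splits)
  note IH = less.IH
  note P = less.prems
  show ?case
  proof (cases "i < b \<and> j < b")
    case True
    show ?thesis by (rule IH[of "b - 1 - a" "b - 1" a L n i j]) (use True P in \<open>auto\<close>)
  next
    case c1: False
    show ?thesis
    proof (cases "a < i \<and> a < j")
      case True
      show ?thesis by (rule IH[of "b - Suc a" b "Suc a" L n i j]) (use True P in \<open>auto\<close>)
    next
      case c2: False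
      show ?thesis
      proof (cases "i = j")
        case True
        then have "n = 0" using P by simp
        then show ?thesis using True wV by simp
      next
        case ne: False
        have ends: "(i = a \<and> j = b) \<or> (i = b \<and> j = a)" using c1 c2 ne P by linarith
        have ab: "a < b" using ends ne P by auto
        show ?thesis
        proof (cases "\<exists>j'. a < j' \<and> j' < b \<and> h j' = L + int n")
          case True
          then obtain j' where j': "a < j'" "j' < b" "h j' = L + int n" by blast
          have R1: "dp V E n (w i) (w j')"
            using ends
          proof
            assume ij0: "i = a \<and> j = b" show ?thesis
              by (rule IH[of "b - 1 - a" "b - 1" a L n i j']) (use ij0 P j' ab in \<open>auto\<close>)
          next
            assume ij0: "i = b \<and> j = a" show ?thesis
              by (rule IH[of "b - Suc a" b "Suc a" L n i j']) (use ij0 P j' ab in \<open>auto\<close>)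
          qed
          define lo where "lo = min j j'"
          define hi where "hi = max j j'"
          have lohi: "lo \<le> hi" "a \<le> lo" "hi \<le> b" "hi - lo < b - a" "lo \<le> j" "j \<le> hi" "lo \<le> j'" "j' \<le> hi"
            using ends j' ab unfolding lo_def hi_def by auto
          define L' where "L' = Min (h ` {lo..hi})"
          have "L' \<in> h ` {lo..hi}" unfolding L'_def using lohi(1) by (intro Min_in) auto
          then obtain m where m: "lo \<le> m" "m \<le> hi" "h m = L'" by auto
          have L'le: "\<forall>t. lo \<le> t \<and> t \<le> hi \<longrightarrow> L' \<le> h t" unfolding L'_def by auto
          have "L \<le> L'" "L' \<le> L + int n" using m P lohi by auto
          define n' where "n' = nat (L + int n - L')"
          have n'le: "n' \<le> n" and n'eq: "L + int n = L' + int n'"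
            unfolding n'_def using \<open>L \<le> L'\<close> \<open>L' \<le> L + int n\<close> by auto
          have bnd: "\<forall>t. lo \<le> t \<and> t \<le> hi \<longrightarrow> L' \<le> h t \<and> h t \<le> L' + int n'"
            using L'le P lohi n'eq by auto
          have R2: "dp V E n' (w m) (w j)"
            by (rule IH[of "hi - lo" hi lo L' n' m j]) (use lohi bnd m n'eq P in \<open>auto\<close>)
          have R3: "dp V E n' (w m) (w j')"
            by (rule IH[of "hi - lo" hi lo L' n' m j']) (use lohi bnd m n'eq P j' in \<open>auto\<close>)
          show ?thesis
          proof (cases "n' = 0")
            case True
            then have "w j = w j'" using R2 R3 by simp
            then show ?thesis using R1 by simp
          next
            case False
            from R1 have "dp V E ((n - n') + n') (w i) (w j')" using n'le by simp
            then obtain s where s1: "dp V E (n - n') (w i) s" and s2: "dp V E n' s (w j')"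
              using dp_add[OF EV] by blast
            have "dp V E n' s (w j)" using rect_dp[OF EV TR _ s2 R3 R2] False by simp
            then have "dp V E ((n - n') + n') (w i) (w j)" using s1 dp_add[OF EV] by blast
            then show ?thesis using n'le by simp
          qed
        next
          case noTop: False
          show ?thesis
          proof (cases "\<exists>i'. a < i' \<and> i' < b \<and> h i' = L")
            case True
            then obtain i' where i': "a < i'" "i' < b" "h i' = L" by blast
            have R1: "dp V E n (w i') (w j)"
              using ends
            proof
              assume ij0: "i = a \<and> j = b" show ?thesis
                by (rule IH[of "b - Suc a" b "Suc a" L n i' j]) (use ij0 P i' ab in \<open>auto\<close>)
            next
              assume ij0: "i = b \<and> j = a" show ?thesis
                by (rule IH[of "b - 1 - a" "b - 1" a L n i' j]) (use ij0 P i' ab in \<open>auto\<close>)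
            qed
            define lo where "lo = min i i'"
            define hi where "hi = max i i'"
            have lohi: "lo \<le> hi" "a \<le> lo" "hi \<le> b" "hi - lo < b - a" "lo \<le> i" "i \<le> hi" "lo \<le> i'" "i' \<le> hi"
              using ends i' ab unfolding lo_def hi_def by auto
            define M where "M = Max (h ` {lo..hi})"
            have "M \<in> h ` {lo..hi}" unfolding M_def using lohi(1) by (intro Max_in) auto
            then obtain m where m: "lo \<le> m" "m \<le> hi" "h m = M" by auto
            have Mle: "\<forall>t. lo \<le> t \<and> t \<le> hi \<longrightarrow> h t \<le> M" unfolding M_def by auto
            have "M \<le> L + int n" "L \<le> M" using m P lohi by auto
            define n' where "n' = nat (M - L)"
            have n'le: "n' \<le> n" and n'eq: "M = L + int n'"
              unfolding n'_def using \<open>M \<le> L + int n\<close> \<open>L \<le> M\<close> by auto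
            have bnd: "\<forall>t. lo \<le> t \<and> t \<le> hi \<longrightarrow> L \<le> h t \<and> h t \<le> L + int n'"
              using Mle P lohi n'eq by auto
            have R2: "dp V E n' (w i) (w m)"
              by (rule IH[of "hi - lo" hi lo L n' i m]) (use lohi bnd m n'eq P in \<open>auto\<close>)
            have R3: "dp V E n' (w i') (w m)"
              by (rule IH[of "hi - lo" hi lo L n' i' m]) (use lohi bnd m n'eq P i' in \<open>auto\<close>)
            show ?thesis
            proof (cases "n' = 0")
              case True
              then have "w i = w i'" using R2 R3 by simp
              then show ?thesis using R1 by simp
            next
              case False
              from R1 have "dp V E (n' + (n - n')) (w i') (w j)" using n'le by simp
              then obtain s where s1: "dp V E n' (w i') s" and s2: "dp V E (n - n') s (w j)"
                using dp_add[OF EV] by blast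
              have "dp V E n' (w i) s" using rect_dp[OF EV TR _ R2 R3 s1] False by simp
              then have "dp V E (n' + (n - n')) (w i) (w j)" using s2 dp_add[OF EV] by blast
              then show ?thesis using n'le by simp
            qed
          next
            case noBot: False
            have inter: "\<forall>t. a < t \<and> t < b \<longrightarrow> L < h t \<and> h t < L + int n"
            proof (intro allI impI)
              fix t assume t: "a < t \<and> t < b"
              then have "L \<le> h t \<and> h t \<le> L + int n" using P by auto
              moreover have "h t \<noteq> L" "h t \<noteq> L + int n" using noTop noBot t by auto
              ultimately show "L < h t \<and> h t < L + int n" by auto
            qed
            have hb: "h b = h (b - 1) + (if f (b - 1) then 1 else -1)"
              using hS[of "b - 1"] ab by simp
            have wb: "w (Suc (b - 1)) = w b" using ab by simp
            from ends show ?thesis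
            proof
              assume ij: "i = a \<and> j = b"
              show ?thesis
              proof (cases "Suc a = b")
                case True
                have "h b = L + (if f a then 1 else -1)" using hS[of a] True P ij by simp
                then have fa: "f a" and n1: "n = 1" using P ij by (auto split: if_splits)
                have "(w a, w b) \<in> E" using step[of a] fa True by simp
                then show ?thesis using ij n1 wV by auto
              next
                case False
                then have sab: "Suc a < b" using ab by simp
                have "L < h (Suc a)" "h (Suc a) < L + int n" using inter sab by auto
                then have fa: "f a" and ha1: "h (Suc a) = L + 1" using hS[of a] P ij by (auto split: if_splits)
                have "h (b - 1) < L + int n" "L < h (b - 1)" using inter sab by auto
                then have fb: "f (b - 1)" and hb1: "h (b - 1) = L + int n - 1" using hb P ij by (auto split: if_splits)
                have n2: "n \<ge> 2" using ha1 \<open>h (Suc a) < L + int n\<close> by auto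
                have inter2: "\<forall>t. Suc a \<le> t \<and> t \<le> b - 1 \<longrightarrow> L + 1 \<le> h t \<and> h t \<le> L + 1 + int (n - 2)"
                proof (intro allI impI)
                  fix t assume t: "Suc a \<le> t \<and> t \<le> b - 1"
                  then have "a < t \<and> t < b" using sab by auto
                  then have "L < h t \<and> h t < L + int n" using inter by blast
                  moreover have "n \<ge> 2" by fact
                  ultimately show "L + 1 \<le> h t \<and> h t \<le> L + 1 + int (n - 2)" by (auto simp: of_nat_diff)
                qed
                have "dp V E (n - 2) (w (Suc a)) (w (b - 1))"
                  by (rule IH[of "b - 1 - Suc a" "b - 1" "Suc a" "L + 1" "n - 2" "Suc a" "b - 1"]) (use inter2 sab n2 ha1 hb1 ab P in \<open>auto simp: of_nat_diff\<close>)
                moreover have "(w (b - 1), w b) \<in> E" using step[of "b - 1"] fb wb by simp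
                ultimately have "dp V E (Suc (n - 2)) (w (Suc a)) (w b)" using dp_Suc_last[OF EV] by blast
                moreover have "(w a, w (Suc a)) \<in> E" using step[of a] fa by simp
                ultimately have "dp V E (Suc (Suc (n - 2))) (w a) (w b)" by auto
                then show ?thesis using n2 ij by (simp add: numeral_2_eq_2 Suc_diff_Suc)
              qed
            next
              assume ij: "i = b \<and> j = a"
              show ?thesis
              proof (cases "Suc a = b")
                case True
                have "L = L + int n + (if f a then 1 else -1)" using hS[of a] True P ij by simp
                then have fa: "\<not> f a" and n1: "n = 1" by (auto split: if_splits)
                have "(w b, w a) \<in> E" using step[of a] fa True by simp
                then show ?thesis using ij n1 wV by auto
              next
                case False
                then have sab: "Suc a < b" using ab by simp
                have "L < h (Suc a)" "h (Suc a) < L + int n" using inter sab by auto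
                then have fa: "\<not> f a" and ha1: "h (Suc a) = L + int n - 1" using hS[of a] P ij by (auto split: if_splits)
                have "h (b - 1) < L + int n" "L < h (b - 1)" using inter sab by auto
                then have fb: "\<not> f (b - 1)" and hb1: "h (b - 1) = L + 1" using hb P ij by (auto split: if_splits)
                have n2: "n \<ge> 2" using hb1 \<open>h (b - 1) < L + int n\<close> by auto
                have inter2: "\<forall>t. Suc a \<le> t \<and> t \<le> b - 1 \<longrightarrow> L + 1 \<le> h t \<and> h t \<le> L + 1 + int (n - 2)"
                proof (intro allI impI)
                  fix t assume t: "Suc a \<le> t \<and> t \<le> b - 1"
                  then have "a < t \<and> t < b" using sab by auto
                  then have "L < h t \<and> h t < L + int n" using inter by blast
                  moreover have "n \<ge> 2" by fact
                  ultimately show "L + 1 \<le> h t \<and> h t \<le> L + 1 + int (n - 2)" by (auto simp: of_nat_diff)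
                qed
                have "dp V E (n - 2) (w (b - 1)) (w (Suc a))"
                  by (rule IH[of "b - 1 - Suc a" "b - 1" "Suc a" "L + 1" "n - 2" "b - 1" "Suc a"]) (use inter2 sab n2 ha1 hb1 ab P in \<open>auto simp: of_nat_diff\<close>)
                moreover have "(w b, w (b - 1)) \<in> E" using step[of "b - 1"] fb wb by simp
                ultimately have "dp V E (Suc (n - 2)) (w b) (w (Suc a))" by auto
                moreover have "(w (Suc a), w a) \<in> E" using step[of a] fa by simp
                ultimately have "dp V E (Suc (Suc (n - 2))) (w b) (w a)" using dp_Suc_last[OF EV] by blast
                then show ?thesis using n2 ij by (simp add: numeral_2_eq_2 Suc_diff_Suc)
              qed
            qed
          qed
        qed
      qed
    qed
  qed
qed


lemma net_length_snoc: "net_length (xs @ [b]) = net_length xs + (if b then 1 else -1)"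
  by (simp add: net_length_def)

theorem mainTheorem10:
  fixes V :: "'a set" and E :: "('a \<times> 'a) set" and d :: int
  assumes "finite V" and "E \<subseteq> V \<times> V"
    and "totally_rectangular V E"
    and "d > 0"
    and "\<exists>vs ds. is_cycle V E vs ds \<and> net_length ds = d"
  shows "\<exists>vs ds. is_cycle V E vs ds \<and> directed ds \<and> int (length vs) = d"
proof -
  note EV = assms(2) and TR = assms(3)
  obtain vs ds where cyc: "is_cycle V E vs ds" and nl: "net_length ds = d" using assms(5) by blast
  define Lc where "Lc = length vs"
  have vne: "vs \<noteq> []" and pth: "is_path V E (vs @ [hd vs]) ds" using cyc by (auto simp: is_cycle_def)
  have Lc0: "Lc > 0" using vne Lc_def by simp
  have lds: "length ds = Lc" using pth Lc_def by (simp add: is_path_def)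
  define w where "w t = vs ! (t mod Lc)" for t
  define f where "f t = ds ! (t mod Lc)" for t
  define h where "h t = net_length (map f [0..<t])" for t
  have step: "if f t then (w t, w (Suc t)) \<in> E else (w (Suc t), w t) \<in> E" for t
  proof -
    let ?i = "t mod Lc"
    have i: "?i < length ds" using lds Lc0 by simp
    then have X: "if ds ! ?i then ((vs @ [hd vs]) ! ?i, (vs @ [hd vs]) ! Suc ?i) \<in> E
      else ((vs @ [hd vs]) ! Suc ?i, (vs @ [hd vs]) ! ?i) \<in> E" using pth unfolding is_path_def by blast
    have e1: "(vs @ [hd vs]) ! ?i = w t" using i lds Lc_def unfolding w_def by (simp add: nth_append)
    have e2: "(vs @ [hd vs]) ! Suc ?i = w (Suc t)"
    proof (cases "Suc ?i = Lc")
      case True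
      then have "Suc t mod Lc = 0" by (simp add: mod_Suc)
      then show ?thesis using True vne unfolding w_def Lc_def by (simp add: hd_conv_nth)
    next
      case False
      then have "Suc t mod Lc = Suc ?i" by (simp add: mod_Suc)
      moreover have "Suc ?i < Lc" using False i lds by simp
      ultimately show ?thesis unfolding w_def Lc_def by (simp add: nth_append)
    qed
    show ?thesis unfolding f_def using X[unfolded e1 e2] .
  qed
  have hS: "h (Suc t) = h t + (if f t then 1 else -1)" for t
    unfolding h_def by (simp add: net_length_snoc)
  have hL: "h Lc = d"
  proof -
    have "map f [0..<Lc] = map (nth ds) [0..<length ds]" using lds unfolding f_def by simp
    also have "\<dots> = ds" by (rule map_nth)
    finally show ?thesis unfolding h_def using nl by simp
  qed
  have fper: "f (t + Lc) = f t" for t unfolding f_def by simp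
  have wper: "w (t + Lc) = w t" for t unfolding w_def by simp
  have hper: "h (t + Lc) = h t + d" for t
  proof (induction t)
    case 0 then show ?case using hL unfolding h_def by (simp add: net_length_def)
  next
    case (Suc t)
    have "h (Suc t + Lc) = h (Suc (t + Lc))" by simp
    also have "\<dots> = h (t + Lc) + (if f (t + Lc) then 1 else -1)" by (rule hS)
    also have "\<dots> = h (Suc t) + d" using Suc fper hS[of t] by simp
    finally show ?case .
  qed
  have hperk: "h (t + k * Lc) = h t + int k * d" for t k
  proof (induction k)
    case 0 then show ?case by simp
  next
    case (Suc k)
    have "h (t + Suc k * Lc) = h ((t + k * Lc) + Lc)" by (simp add: algebra_simps)
    also have "\<dots> = h t + int (Suc k) * d" using hper[of "t + k * Lc"] Suc by (simp add: algebra_simps)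
    finally show ?case .
  qed
  have hdec: "h t \<ge> h (t mod Lc)" for t
  proof -
    have "h t = h (t mod Lc + (t div Lc) * Lc)" by simp
    also have "\<dots> = h (t mod Lc) + int (t div Lc) * d" by (rule hperk)
    finally show ?thesis using assms(4) by simp
  qed
  have "Min (h ` {..<Lc}) \<in> h ` {..<Lc}" using Lc0 by (intro Min_in) auto
  then obtain a where a: "a < Lc" "h a = Min (h ` {..<Lc})" by auto
  have amin: "h a \<le> h t" for t
  proof -
    have "h a \<le> h (t mod Lc)" using a Lc0 by simp
    then show ?thesis using hdec[of t] by simp
  qed
  have "Max (h ` {a + Lc..<a + 2 * Lc}) \<in> h ` {a + Lc..<a + 2 * Lc}" using Lc0 by (intro Max_in) auto
  then obtain j where j: "a + Lc \<le> j" "j < a + 2 * Lc" "h j = Max (h ` {a + Lc..<a + 2 * Lc})" by auto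
  have jmax: "h t \<le> h j" if "a + Lc \<le> t" "t < a + 2 * Lc" for t
    using that j by simp
  have seg1: "\<forall>t. a \<le> t \<and> t \<le> j \<longrightarrow> h a \<le> h t \<and> h t \<le> h a + int (nat (h j - h a))"
  proof (intro allI impI)
    fix t assume t: "a \<le> t \<and> t \<le> j"
    have "h t \<le> h j"
    proof (cases "a + Lc \<le> t")
      case True then show ?thesis using jmax t j by simp
    next
      case False
      then have "h (t + Lc) \<le> h j" using jmax[of "t + Lc"] t by simp
      then show ?thesis using hper[of t] assms(4) by simp
    qed
    then show "h a \<le> h t \<and> h t \<le> h a + int (nat (h j - h a))" using amin[of t] amin[of j] by simp
  qed
  have hjd: "h j \<ge> h a + d" using jmax[of "a + Lc"] hper[of a] Lc0 by simp
  have seg2: "\<forall>t. a + Lc \<le> t \<and> t \<le> j \<longrightarrow> h a + d \<le> h t \<and> h t \<le> (h a + d) + int (nat (h j - h a - d))"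
  proof (intro allI impI)
    fix t assume t: "a + Lc \<le> t \<and> t \<le> j"
    have "h (t - Lc + Lc) = h (t - Lc) + d" by (rule hper)
    then have "h t = h (t - Lc) + d" using t by simp
    then have "h a + d \<le> h t" using amin[of "t - Lc"] by simp
    moreover have "h t \<le> h j" using seg1[rule_format, of t] t amin[of j] by auto
    ultimately show "h a + d \<le> h t \<and> h t \<le> (h a + d) + int (nat (h j - h a - d))" using hjd by simp
  qed
  define n2 where "n2 = nat (h j - h a - d)"
  have D1: "dp V E (nat (h j - h a)) (w a) (w j)"
    by (rule lemB[where f=f and w=w and h=h and b=j and a=a and N="j - a" and L="h a" and n="nat (h j - h a)" and i=a and j=j, OF EV TR step hS]) (use seg1 j amin[of j] in auto)
  have D2: "dp V E n2 (w (a + Lc)) (w j)"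
    unfolding n2_def
    by (rule lemB[where f=f and w=w and h=h and b=j and a="a + Lc" and N="j - (a + Lc)" and L="h a + d" and n="nat (h j - h a - d)" and i="a + Lc" and j=j, OF EV TR step hS])
      (use seg2 j hjd hper[of a] in auto)
  have "nat (h j - h a) = n2 + nat d" unfolding n2_def using hjd assms(4) by simp
  then have D1': "dp V E (n2 + nat d) (w a) (w j)" using D1 by simp
  have D2': "dp V E n2 (w a) (w j)" using D2 wper by simp
  obtain z where z: "dp V E (nat d) z z" using lemA[OF EV TR _ D2' D1'] assms(4) by (auto simp: Suc_le_eq)
  then obtain ws es where p: "is_path V E ws es" "directed es" "length es = nat d" "hd ws = z" "last ws = z"
    using has_dpath_dp[OF EV] unfolding has_dpath_def by blast
  have lws: "length ws = Suc (nat d)" using p(1) p(3) by (cases ws) (auto simp: is_path_def)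
  have bne: "butlast ws \<noteq> []" using lws assms(4) by (cases ws) auto
  have hb: "hd (butlast ws) = hd ws" using lws assms(4) by (cases ws) auto
  have wsne: "ws \<noteq> []" using lws by auto
  have "butlast ws @ [hd (butlast ws)] = ws" using hb p(4) p(5) wsne by (metis append_butlast_last_id)
  then have "is_cycle V E (butlast ws) es" unfolding is_cycle_def using bne p(1) by simp
  moreover have "int (length (butlast ws)) = d" using lws assms(4) by simp
  ultimately show ?thesis using p(2) by blast
qed

end
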